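(* There is a strictly monotone increasing unbounded sequence $\Lambda=(\lambda_0,\lambda_1,\ldots)$ of real numbers such that the gaps $\lambda_n-\lambda_{n-1}$ tend to $0$ monotone decreasingly (i.e. $\Lambda$ is a decreasing gap asymptotically dense set), with the following property: for every open set $G\subset\mathbb{R}$ there is a function $f_G:\mathbb{R}\to[0,+\infty)$ of the form $f_G=\chi_{U_G}$ for some closed set $U_G\subset\mathbb{R}$, such that \[ \mu\Big(\Big\{x\notin G : \sum_{n=0}^\infty f_G(x+\lambda_n)=\infty\Big\}\Big)=0 \quad\text{and}\quad \sum_{n=0}^\infty f_G(x+\lambda_n)=\infty \text{ for every } x\in G. \] In particular $D(f_G,\Lambda)\supset G$ and $C(f_G,\Lambda)=\mathbb{R}\setminus G$ modulo sets of Lebesgue measure zero. Moreover, for every open $G\subset\mathbb{R}$ one can also select a function $g_G\in C_0^+(\mathbb{R})$ satisfying the two displayed properties in place of $f_G$.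
   Context: $\mu$ denotes one-dimensional Lebesgue measure and $\chi_U$ the characteristic function of $U$. For a discrete set $\Lambda\subset\mathbb{R}$ and measurable $f:\mathbb{R}\to[0,+\infty)$, put $s(x)=\sum_{\lambda\in\Lambda}f(x+\lambda)$, $C(f,\Lambda)=\{x: s(x)<\infty\}$ and $D(f,\Lambda)=\{x: s(x)=\infty\}$. $C_0^+(\mathbb{R})$ denotes the set of continuous functions $\mathbb{R}\to[0,+\infty)$ that tend to $0$ at $+\infty$. *)

theory Defs
  imports "HOL-Analysis.Analysis"
begin

definition shift_sum :: "(real \<Rightarrow> real) \<Rightarrow> (nat \<Rightarrow> real) \<Rightarrow> real \<Rightarrow> ennreal" where
  "shift_sum f lam x = (\<Sum>n. ennreal (f (x + lam n)))"

definition good_for :: "(real \<Rightarrow> real) \<Rightarrow> (nat \<Rightarrow> real) \<Rightarrow> real set \<Rightarrow> bool" where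
  "good_for f lam G \<longleftrightarrow>
     {x. x \<notin> G \<and> shift_sum f lam x = \<infinity>} \<in> null_sets lebesgue \<and>
     (\<forall>x\<in>G. shift_sum f lam x = \<infinity>)"

end

theory Submission
  imports Defs "HOL-Real_Asymp.Real_Asymp"
begin


definition Qn :: "nat \<Rightarrow> nat" where "Qn k = 2^(3*k+8)"
definition bx :: "nat \<Rightarrow> nat" where "bx k = 4*k^2 + 30*k + 30"
definition ee :: "nat \<Rightarrow> real" where "ee k = 1 / 2^(bx k)"
definition hh :: "nat \<Rightarrow> real" where "hh k = real (Qn k) * ee k"
definition dd :: "nat \<Rightarrow> real" where "dd k = (real (Qn k) + 1) * ee k"
definition Lh :: "nat \<Rightarrow> real" where "Lh k = 1 / 2^(k+2)"
definition LL :: "nat \<Rightarrow> real" where "LL k = 2 * Lh k"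
definition RR :: "nat \<Rightarrow> real" where "RR k = real k + 1"
definition AA :: "nat \<Rightarrow> nat" where "AA k = 2^(bx k - (4*k+10))"

lemma pow_frac:
  fixes X :: real
  assumes "X \<le> 2^a" "a + c \<le> b"
  shows "X / 2^b \<le> 1 / 2^c"
proof -
  obtain r where r: "b = a + c + r" using assms(2) le_Suc_ex by blast
  have e: "(2::real)^b = 2^a * 2^c * 2^r" by (simp add: r power_add)
  have o: "(1::real) \<le> 2^r" by simp
  have "X / 2^b \<le> 2^a / 2^b" using assms(1) by (simp add: divide_right_mono)
  also have "\<dots> = 1 / (2^c * 2^r)" using e by simp
  also have "\<dots> \<le> 1 / 2^c" using o
    by (simp add: frac_le)
  finally show ?thesis .
qed

lemma pow2_ge1: "(1::real) \<le> 2^n" by simp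

lemma Qn_pos: "Qn k \<ge> 1" by (simp add: Qn_def)
lemma ee_pos: "ee k > 0" by (simp add: ee_def)
lemma hh_pos: "hh k > 0" using Qn_pos[of k] ee_pos[of k] by (simp add: hh_def)
lemma dd_eq: "dd k = hh k + ee k" by (simp add: dd_def hh_def algebra_simps)
lemma dd_pos: "dd k > 0" using hh_pos[of k] ee_pos[of k] by (simp add: dd_eq)
lemma Lh_pos: "Lh k > 0" by (simp add: Lh_def)
lemma LL_pos: "LL k > 0" by (simp add: LL_def Lh_pos)
lemma RR_pos: "RR k \<ge> 1" by (simp add: RR_def)

lemma bx_Suc: "bx (Suc k) = bx k + (8*k+34)"
  by (simp add: bx_def power2_eq_square algebra_simps)

lemma ee_Suc: "ee (Suc k) = ee k / 2^(8*k+34)"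
  by (simp add: ee_def bx_Suc power_add)

lemma bx_ge: "bx k \<ge> 7*k + 30"
  by (simp add: bx_def)

lemma Q_real: "real (Qn k) = 2^(3*k+8)" by (simp add: Qn_def)

lemma cover_ineq: "(real (Qn k) * (real (Qn k) + 1) + 1) * ee k \<le> Lh k"
proof -
  have q1: "1 \<le> real (Qn k)" using Qn_pos[of k] by simp
  have q2: "1 * real (Qn k) \<le> real (Qn k) * real (Qn k)" using q1 by (intro mult_right_mono) auto
  have q3: "real (Qn k) * (real (Qn k) + 1) + 1 = real (Qn k) * real (Qn k) + real (Qn k) + 1"
    by (simp add: algebra_simps)
  have "real (Qn k) * (real (Qn k) + 1) + 1 \<le> 4 * real (Qn k) * real (Qn k)"
    using q1 q2 q3 by linarith
  also have "\<dots> = 2^(6*k+18)"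
  proof -
    have "6*k+18 = 2 + (3*k+8) + (3*k+8)" by simp
    hence "(2::real)^(6*k+18) = 2^2 * 2^(3*k+8) * 2^(3*k+8)" by (simp only: power_add)
    thus ?thesis unfolding Q_real by simp
  qed
  finally have X: "real (Qn k) * (real (Qn k) + 1) + 1 \<le> 2^(6*k+18)" .
  have "(real (Qn k) * (real (Qn k) + 1) + 1) / 2^(bx k) \<le> 1 / 2^(k+2)"
    by (rule pow_frac[OF X]) (use bx_ge[of k] in simp)
  then show ?thesis by (simp add: ee_def Lh_def)
qed

lemma two_pow_ge: "real k + 1 \<le> 2^k"
proof -
  have "k + 1 \<le> (2::nat)^k" using less_exp[of k] by (simp add: Suc_le_eq)
  hence "real (k+1) \<le> real ((2::nat)^k)" by (simp only: of_nat_le_iff)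
  thus ?thesis by simp
qed

lemma ee_le1: "ee k \<le> 1" by (simp add: ee_def)

lemma LhA: "Lh k = real (AA k) * hh k"
proof -
  obtain r where r: "bx k = (4*k+10) + r" using bx_ge[of k] le_Suc_ex[of "4*k+10" "bx k"] by auto
  have AA: "AA k = 2^r" by (simp add: AA_def r)
  have bxe: "bx k = (k+2) + (3*k+8) + r" by (simp add: r)
  have "(2::real)^(bx k) = 2^(k+2) * 2^(3*k+8) * 2^r"
    by (subst bxe) (simp only: power_add)
  thus ?thesis by (simp add: Lh_def hh_def ee_def AA Q_real)
qed

lemma small_ineq: "real (Qn k) * hh k + dd k + 2 * ee k \<le> LL k"
proof -
  have "real (Qn k) * hh k + dd k + 2 * ee k =
        (real (Qn k) * (real (Qn k) + 1) + 1) * ee k + 2 * ee k"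
    by (simp add: hh_def dd_def algebra_simps)
  also have "\<dots> \<le> Lh k + Lh k"
  proof -
    have q1: "1 \<le> real (Qn k)" using Qn_pos[of k] by simp
    have q2: "1 * 1 \<le> real (Qn k) * (real (Qn k) + 1)" using q1 by (intro mult_mono) auto
    have "2 * ee k \<le> (real (Qn k) * (real (Qn k) + 1) + 1) * ee k"
      using q2 ee_pos[of k] by (intro mult_right_mono) auto
    thus ?thesis using cover_ineq[of k] by simp
  qed
  finally show ?thesis by (simp add: LL_def)
qed

lemma hh_le1: "hh k \<le> 1"
proof -
  have "hh k \<le> real (Qn k) * hh k" using Qn_pos[of k] hh_pos[of k] by simp
  also have "\<dots> \<le> LL k" using small_ineq[of k] dd_pos[of k] ee_pos[of k] by simp
  also have "\<dots> \<le> 1" by (simp add: LL_def Lh_def power_add) (use pow2_ge1[of k] in linarith)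
  finally show ?thesis .
qed

lemma dd_le_LL: "dd k \<le> LL k"
proof -
  have "0 \<le> real (Qn k) * hh k" using hh_pos[of k] by simp
  thus ?thesis using small_ineq[of k] ee_pos[of k] by linarith
qed

lemma LL_le: "LL k \<le> 1/2"
proof -
  have "LL k = 1 / (2 * 2^k)" by (simp add: LL_def Lh_def power_add)
  also have "\<dots> \<le> 1 / 2" using pow2_ge1[of k] by (simp add: frac_le)
  finally show ?thesis .
qed

lemma coset_ineq: "(2 * (RR k + 1) / hh k + 1) * (3 * ee k) \<le> 1 / 2^(k+2)"
proof -
  have e1: "(2 * (RR k + 1) / hh k + 1) * (3 * ee k) = (6 * (real k + 2)) / 2^(3*k+8) + 3 / 2^(bx k)"
    using ee_pos[of k] by (simp add: hh_def Q_real RR_def field_simps) (simp add: ee_def)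
  have "6 * (real k + 2) \<le> 2^(k+5)"
  proof -
    have "real (k+1) + 1 \<le> 2^(k+1)" by (rule two_pow_ge)
    hence "6 * (real k + 2) \<le> 6 * 2^(k+1)" by simp
    also have "\<dots> \<le> 2^(k+5)"
    proof -
      have "(2::real)^(k+5) = 32 * 2^k" "(2::real)^(k+1) = 2*2^k" by (simp_all add: power_add)
      thus ?thesis using one_le_power[of "2::real" k] by linarith
    qed
    finally show ?thesis .
  qed
  hence a: "(6 * (real k + 2)) / 2^(3*k+8) \<le> 1 / 2^(k+3)" by (rule pow_frac) simp
  have b: "3 / 2^(bx k) \<le> (1::real) / 2^(k+3)" by (rule pow_frac[where a=2]) (use bx_ge[of k] in auto)
  have "(1::real) / 2^(k+3) + 1 / 2^(k+3) = 1 / 2^(k+2)" by (simp add: power_add)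
  thus ?thesis using a b e1 by linarith
qed

lemma hh_ge_dd: "dd (Suc k) \<le> hh k"
proof -
  have "dd (Suc k) = (2^(3*k+11) + 1) * ee k / 2^(8*k+34)"
    by (simp add: dd_def Q_real ee_Suc)
  also have "\<dots> \<le> 2^(3*k+12) * ee k / 2^(8*k+34)"
  proof -
    have "(2::real)^(3*k+12) = 2 * 2^(3*k+11)" by (simp add: power_add)
    hence "(2::real)^(3*k+11) + 1 \<le> 2^(3*k+12)" using pow2_ge1[of "3*k+11"] by linarith
    thus ?thesis using ee_pos[of k] by (intro divide_right_mono mult_right_mono) auto
  qed
  also have "\<dots> \<le> 2^(3*k+8) * ee k"
  proof -
    have "(2::real)^(3*k+12) \<le> 2^(3*k+8) * 2^(8*k+34)"
      unfolding power_add[symmetric] by (rule power_increasing) auto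
    thus ?thesis using ee_pos[of k] by (simp add: field_simps)
  qed
  finally show ?thesis by (simp add: hh_def Q_real)
qed

lemma aux_frac: "(e::real) > 0 \<Longrightarrow> A > 0 \<Longrightarrow> B > 0 \<Longrightarrow> X / (A * e) * (3 * (e / B)) = 3 * X / (A * B)"
  by (simp add: field_simps)

lemma sparse_ineq:
  "(2 * (RR (Suc j) + 2) / Lh (Suc j) + 1) * (real (Qn (Suc j)) + 1) *
     ((2 * RR (Suc j) + 2) / hh j + 1) * (3 * ee (Suc j)) \<le> 1 / 2^(Suc j + 2)"
proof -
  define k where "k = Suc j"
  define P :: real where "P = 2^k"
  have P1: "1 \<le> P" by (simp add: P_def)
  have kP: "real k + 1 \<le> P" unfolding P_def by (rule two_pow_ge)
  have p2: "(2::real)^(k+2) = 4 * P" by (simp add: P_def power_add)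
  have p26: "(2::real)^(2*k+6) = 64 * (P * P)"
  proof -
    have "2*k+6 = 6 + k + k" by simp
    hence "(2::real)^(2*k+6) = 2^6 * 2^k * 2^k" by (simp only: power_add)
    thus ?thesis by (simp add: P_def)
  qed
  have T1: "2 * (RR k + 2) / Lh k + 1 \<le> 2^(2*k+6)"
  proof -
    have e: "2 * (RR k + 2) / Lh k + 1 = 2 * (real k + 3) * (4 * P) + 1"
      by (simp add: RR_def Lh_def P_def power_add algebra_simps)
    have "(real k + 3) * (4 * P) \<le> (4 * P) * (4 * P)"
      using kP P1 by (intro mult_right_mono) auto
    hence "2 * (real k + 3) * (4 * P) + 1 \<le> 32 * (P * P) + 1" by (simp add: algebra_simps)
    also have "\<dots> \<le> 64 * (P * P)"
    proof -
      have "1 * 1 \<le> P * P" using P1 by (intro mult_mono) auto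
      thus ?thesis by linarith
    qed
    finally show ?thesis using e p26 by simp
  qed
  have T2: "real (Qn k) + 1 \<le> 2^(3*k+9)"
  proof -
    have "(2::real)^(3*k+9) = 2 * 2^(3*k+8)" by (simp add: power_add)
    thus ?thesis using pow2_ge1[of "3*k+8"] unfolding Q_real by linarith
  qed
  have hj: "hh j = 2^(3*j+8) * ee j" by (simp add: hh_def Q_real)
  have eek: "ee k = ee j / 2^(8*j+34)" by (simp add: k_def ee_Suc)
  have pw: "(2::real)^(3*j+8) * 2^(8*j+34) = 2^(11*j+42)"
  proof -
    have "11*j+42 = (3*j+8) + (8*j+34)" by simp
    thus ?thesis by (simp only: power_add)
  qed
  have T34: "((2 * RR k + 2) / hh j + 1) * (3 * ee k) \<le> 3 * (2 * real k + 5) / 2^(11*j+42)"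
  proof -
    have "(2 * RR k + 2) / hh j + 1 \<le> (2 * RR k + 2) / hh j + 1 / hh j"
      using hh_le1[of j] hh_pos[of j] by (simp add: divide_simps)
    also have "\<dots> = (2 * real k + 5) / hh j" by (simp add: RR_def add_divide_distrib[symmetric])
    finally have "((2 * RR k + 2) / hh j + 1) * (3 * ee k) \<le> (2 * real k + 5) / hh j * (3 * ee k)"
      using ee_pos[of k] by (intro mult_right_mono) auto
    also have "\<dots> = 3 * (2 * real k + 5) / (2^(3*j+8) * 2^(8*j+34))"
      unfolding hj eek by (rule aux_frac) (auto simp: ee_pos)
    also have "\<dots> = 3 * (2 * real k + 5) / 2^(11*j+42)" by (simp only: pw)
    finally show ?thesis .
  qed
  have X: "3 * (2 * real k + 5) \<le> 2^(k+5)"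
  proof -
    have a: "(2::real)^(k+5) = 32 * P" by (simp add: P_def power_add)
    have "3 * (2 * real k + 5) \<le> 32 * P" using kP P1 by simp
    thus ?thesis using a by simp
  qed
  have nn1: "0 \<le> 2 * (RR k + 2) / Lh k + 1" using Lh_pos[of k] RR_pos[of k] by simp
  have nn2: "0 \<le> ((2 * RR k + 2) / hh j + 1) * (3 * ee k)"
    using hh_pos[of j] RR_pos[of k] ee_pos[of k] by simp
  have "(2 * (RR k + 2) / Lh k + 1) * (real (Qn k) + 1) * ((2 * RR k + 2) / hh j + 1) * (3 * ee k)
       = (2 * (RR k + 2) / Lh k + 1) * (real (Qn k) + 1) * (((2 * RR k + 2) / hh j + 1) * (3 * ee k))"
    by (simp only: mult.assoc)
  also have "\<dots> \<le> 2^(2*k+6) * 2^(3*k+9) * (3 * (2 * real k + 5) / 2^(11*j+42))"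
    by (intro mult_mono T1 T2 T34 nn1 nn2 mult_nonneg_nonneg) auto
  also have "\<dots> \<le> 2^(2*k+6) * 2^(3*k+9) * (2^(k+5) / 2^(11*j+42))"
    using X by (intro mult_left_mono divide_right_mono) auto
  also have "\<dots> = 2^(6*j+26) / 2^(11*j+42)"
  proof -
    have "6*j+26 = (2*k+6) + (3*k+9) + (k+5)" by (simp add: k_def)
    hence "(2::real)^(6*j+26) = 2^(2*k+6) * 2^(3*k+9) * 2^(k+5)" by (simp only: power_add)
    thus ?thesis by simp
  qed
  also have "\<dots> \<le> 1 / 2^(j+3)" by (rule pow_frac) auto
  also have "(1::real) / 2^(j+3) = 1 / 2^(Suc j + 2)" by (simp add: power_add)
  finally show ?thesis unfolding k_def .
qed



definition JJ :: "nat \<Rightarrow> nat" where "JJ k = nat \<lceil>LL k / dd k\<rceil>"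
definition II :: "nat \<Rightarrow> nat" where "II k = nat \<lceil>(3 * RR k + 10) / hh k\<rceil>"
definition SS :: "nat \<Rightarrow> nat" where "SS k = JJ k + II k"
definition NN :: "nat \<Rightarrow> nat" where "NN k = (\<Sum>i<k. SS i)"
definition PP :: "nat \<Rightarrow> nat" where "PP k = NN k + JJ k"
definition st :: "nat \<Rightarrow> nat" where "st n = (LEAST k. n < NN (Suc k))"
definition gap :: "nat \<Rightarrow> real" where "gap n = (if n < PP (st n) then dd (st n) else hh (st n))"
definition lam :: "nat \<Rightarrow> real" where "lam n = (\<Sum>i<n. gap i)"

lemma ceil_bounds:
  fixes x :: real assumes "x > 0"
  shows "real (nat \<lceil>x\<rceil>) \<ge> x" "real (nat \<lceil>x\<rceil>) < x + 1" "nat \<lceil>x\<rceil> \<ge> 1"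
proof -
  have "real (nat \<lceil>x\<rceil>) = of_int \<lceil>x\<rceil>" using assms by simp
  then show "real (nat \<lceil>x\<rceil>) \<ge> x" "real (nat \<lceil>x\<rceil>) < x + 1"
    using le_of_int_ceiling[of x] ceiling_correct[of x] by linarith+
  show "nat \<lceil>x\<rceil> \<ge> 1" using assms by linarith
qed

lemma JJ_pos: "JJ k \<ge> 1"
  unfolding JJ_def by (rule ceil_bounds) (use LL_pos[of k] dd_pos[of k] in simp)

lemma II_pos: "II k \<ge> 1"
  unfolding II_def by (rule ceil_bounds) (use RR_pos[of k] hh_pos[of k] in simp)

lemma JJ_lower: "LL k \<le> real (JJ k) * dd k"
proof -
  have "LL k / dd k \<le> real (JJ k)" unfolding JJ_def
    by (rule ceil_bounds) (use LL_pos[of k] dd_pos[of k] in simp)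
  thus ?thesis using dd_pos[of k] by (simp add: divide_simps)
qed

lemma JJ_upper: "real (JJ k) * dd k \<le> LL k + dd k"
proof -
  have "real (JJ k) < LL k / dd k + 1" unfolding JJ_def
    by (rule ceil_bounds) (use LL_pos[of k] dd_pos[of k] in simp)
  hence "real (JJ k) * dd k \<le> (LL k / dd k + 1) * dd k"
    using dd_pos[of k] by (intro mult_right_mono) auto
  thus ?thesis using dd_pos[of k] by (simp add: algebra_simps)
qed

lemma II_lower: "3 * RR k + 10 \<le> real (II k) * hh k"
proof -
  have "(3 * RR k + 10) / hh k \<le> real (II k)" unfolding II_def
    by (rule ceil_bounds) (use RR_pos[of k] hh_pos[of k] in simp)
  thus ?thesis using hh_pos[of k] by (simp add: divide_simps)
qed

lemma II_upper: "real (II k) * hh k \<le> 3 * RR k + 11"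
proof -
  have "real (II k) < (3 * RR k + 10) / hh k + 1" unfolding II_def
    by (rule ceil_bounds) (use RR_pos[of k] hh_pos[of k] in simp)
  hence "real (II k) * hh k \<le> ((3 * RR k + 10) / hh k + 1) * hh k"
    using hh_pos[of k] by (intro mult_right_mono) auto
  moreover have "((3 * RR k + 10) / hh k + 1) * hh k = 3 * RR k + 10 + hh k"
    using hh_pos[of k] by (simp add: field_simps)
  ultimately show ?thesis using hh_le1[of k] by linarith
qed

lemma NN_Suc: "NN (Suc k) = NN k + SS k" by (simp add: NN_def)
lemma NN_0: "NN 0 = 0" by (simp add: NN_def)
lemma SS_pos: "SS k \<ge> 1" using II_pos[of k] by (simp add: SS_def)

lemma NN_mono: "k \<le> k' \<Longrightarrow> NN k \<le> NN k'"
  unfolding NN_def by (rule sum_mono2) auto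

lemma NN_Suc_le: "k < k' \<Longrightarrow> NN (Suc k) \<le> NN k'"
  by (rule NN_mono) simp

lemma NN_ge: "k \<le> NN k"
  by (induction k) (auto simp: NN_Suc intro: order.trans[OF _ add_mono[OF _ SS_pos]])

lemma st_eq:
  assumes "NN k \<le> n" "n < NN (Suc k)"
  shows "st n = k"
  unfolding st_def
proof (rule Least_equality)
  show "n < NN (Suc k)" by fact
  fix y assume "n < NN (Suc y)"
  show "k \<le> y"
  proof (rule ccontr)
    assume "\<not> k \<le> y"
    hence "NN (Suc y) \<le> NN k" by (intro NN_Suc_le) simp
    thus False using assms \<open>n < NN (Suc y)\<close> by simp
  qed
qed

lemma st_range: "NN (st n) \<le> n \<and> n < NN (Suc (st n))"
proof -
  have ex: "n < NN (Suc n)" using NN_ge[of "Suc n"] by simp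
  have a: "n < NN (Suc (st n))" unfolding st_def by (rule LeastI[of _ n]) (rule ex)
  have "NN (st n) \<le> n"
  proof (cases "st n")
    case 0 then show ?thesis by (simp add: NN_0)
  next
    case (Suc k)
    have "\<not> n < NN (Suc k)"
    proof
      assume "n < NN (Suc k)"
      hence "st n \<le> k" unfolding st_def by (rule Least_le)
      thus False using Suc by simp
    qed
    thus ?thesis using Suc by simp
  qed
  thus ?thesis using a by simp
qed

lemma gap_d: "NN k \<le> n \<Longrightarrow> n < PP k \<Longrightarrow> gap n = dd k"
  using st_eq[of k n] by (simp add: gap_def PP_def NN_Suc SS_def)

lemma gap_h: "PP k \<le> n \<Longrightarrow> n < NN (Suc k) \<Longrightarrow> gap n = hh k"
  using st_eq[of k n] JJ_pos[of k] by (simp add: gap_def PP_def NN_Suc SS_def)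

lemma dd_Suc_le: "dd (Suc k) \<le> dd k"
  using hh_ge_dd[of k] ee_pos[of k] by (simp add: dd_eq)

lemma dd_antimono: "k \<le> k' \<Longrightarrow> dd k' \<le> dd k"
  by (induction k' rule: dec_induct) (auto intro: order.trans[OF dd_Suc_le])

lemma gap_bounds: "hh (st n) \<le> gap n \<and> gap n \<le> dd (st n)"
  using ee_pos[of "st n"] by (simp add: gap_def dd_eq)

lemma gap_pos: "gap n > 0"
  using gap_bounds[of n] hh_pos[of "st n"] by linarith

lemma gap_Suc_le: "gap (Suc n) \<le> gap n"
proof -
  define k where "k = st n"
  have r: "NN k \<le> n" "n < NN (Suc k)" using st_range[of n] by (auto simp: k_def)
  show ?thesis
  proof (cases "Suc n < NN (Suc k)")
    case True
    have sk: "st (Suc n) = k" using st_eq[of k "Suc n"] r True by simp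
    show ?thesis using r True sk ee_pos[of k] by (auto simp: gap_def k_def dd_eq)
  next
    case False
    hence eq: "Suc n = NN (Suc k)" using r by simp
    have "gap n = hh k" using eq JJ_pos[of k] II_pos[of k] r
      by (intro gap_h) (auto simp: PP_def NN_Suc SS_def)
    moreover have "gap (Suc n) = dd (Suc k)" using eq JJ_pos[of "Suc k"]
      by (intro gap_d) (auto simp: PP_def)
    ultimately show ?thesis using hh_ge_dd[of k] by simp
  qed
qed

lemma gap_decseq: "decseq gap"
  using gap_Suc_le by (simp add: decseq_SucI)

lemma lam_Suc: "lam (Suc n) = lam n + gap n" by (simp add: lam_def)

lemma lam_diff: "a \<le> b \<Longrightarrow> lam b - lam a = (\<Sum>i\<in>{a..<b}. gap i)"
  unfolding lam_def by (simp add: sum_diff_nat_ivl lessThan_atLeast0)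

lemma lam_down:
  assumes "j \<le> JJ k" shows "lam (PP k - j) = lam (PP k) - real j * dd k"
proof -
  have "lam (PP k) - lam (PP k - j) = (\<Sum>i\<in>{PP k - j..<PP k}. gap i)" by (rule lam_diff) simp
  also have "\<dots> = (\<Sum>i\<in>{PP k - j..<PP k}. dd k)"
    using assms by (intro sum.cong refl gap_d) (auto simp: PP_def)
  also have "\<dots> = real j * dd k" using assms by (simp add: PP_def)
  finally show ?thesis by simp
qed

lemma lam_up:
  assumes "i \<le> II k" shows "lam (PP k + i) = lam (PP k) + real i * hh k"
proof -
  have "lam (PP k + i) - lam (PP k) = (\<Sum>n\<in>{PP k..<PP k + i}. gap n)" by (rule lam_diff) simp
  also have "\<dots> = (\<Sum>n\<in>{PP k..<PP k + i}. hh k)"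
    using assms by (intro sum.cong refl gap_h) (auto simp: PP_def NN_Suc SS_def)
  also have "\<dots> = real i * hh k" by simp
  finally show ?thesis by simp
qed

lemma PP_Suc: "PP (Suc k) = PP k + II k + JJ (Suc k)"
  by (simp add: PP_def NN_Suc SS_def)

lemma lam_PP_Suc: "lam (PP (Suc k)) = lam (PP k) + real (II k) * hh k + real (JJ (Suc k)) * dd (Suc k)"
proof -
  have a: "lam (PP k + II k) = lam (PP k) + real (II k) * hh k" by (rule lam_up) simp
  have "lam (PP (Suc k) - JJ (Suc k)) = lam (PP (Suc k)) - real (JJ (Suc k)) * dd (Suc k)"
    by (rule lam_down) simp
  moreover have "PP (Suc k) - JJ (Suc k) = PP k + II k" by (simp add: PP_Suc)
  ultimately show ?thesis using a by simp
qed

lemma lam_strict_mono: "strict_mono lam"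
  by (rule strict_monoI_Suc) (simp add: lam_Suc gap_pos)

lemma lam_nonneg: "lam n \<ge> 0"
  unfolding lam_def by (rule sum_nonneg) (simp add: gap_pos less_imp_le)

lemma lam_PP_step: "lam (PP (Suc k)) \<ge> lam (PP k) + 3 * RR k + 10"
proof -
  have "0 \<le> real (JJ (Suc k)) * dd (Suc k)" using dd_pos[of "Suc k"] by simp
  thus ?thesis using lam_PP_Suc[of k] II_lower[of k] by linarith
qed

lemma lam_PP_ge: "lam (PP k) \<ge> 13 * real k"
proof (induction k)
  case 0 then show ?case using lam_nonneg by simp
next
  case (Suc k) then show ?case using lam_PP_step[of k] RR_pos[of k] by simp
qed

lemma lam_PP_le: "lam (PP k) \<le> 15 * (real k + 1)^2"
proof (induction k)
  case 0
  have "lam (PP 0) = real (JJ 0) * dd 0"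
    using lam_down[of "JJ 0" 0] by (simp add: PP_def NN_0 lam_def)
  also have "\<dots> \<le> LL 0 + dd 0" by (rule JJ_upper)
  also have "\<dots> \<le> 2" using dd_le_LL[of 0] LL_le[of 0] by linarith
  finally show ?case by simp
next
  case (Suc k)
  have "real (JJ (Suc k)) * dd (Suc k) \<le> 2"
    using JJ_upper[of "Suc k"] dd_le_LL[of "Suc k"] LL_le[of "Suc k"] by linarith
  hence "lam (PP (Suc k)) \<le> lam (PP k) + 3 * RR k + 13"
    using lam_PP_Suc[of k] II_upper[of k] by simp
  also have "\<dots> \<le> 15 * (real k + 1)^2 + 3 * real k + 16" using Suc by (simp add: RR_def)
  also have "\<dots> \<le> 15 * (real (Suc k) + 1)^2" by (simp add: power2_eq_square algebra_simps)
  finally show ?case .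
qed

lemma gap_ge_before:
  assumes "n < NN (Suc k)" shows "gap n \<ge> hh k"
proof -
  have "NN (Suc k) - 1 \<ge> PP k" using II_pos[of k] by (simp add: PP_def NN_Suc SS_def)
  hence "gap (NN (Suc k) - 1) = hh k" using SS_pos[of k]
    by (intro gap_h) (auto simp: NN_Suc)
  moreover have "gap (NN (Suc k) - 1) \<le> gap n"
    using gap_decseq assms by (simp add: decseq_def)
  ultimately show ?thesis by simp
qed

lemma lam_tendsto: "filterlim lam at_top sequentially"
  unfolding filterlim_at_top
proof
  fix Z :: real
  obtain k :: nat where k: "Z / 13 \<le> real k" using real_arch_simple by blast
  show "\<forall>\<^sub>F n in sequentially. Z \<le> lam n"
  proof (rule eventually_sequentiallyI[of "PP k"])
    fix n assume "PP k \<le> n"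
    hence "lam (PP k) \<le> lam n" using strict_mono_mono[OF lam_strict_mono] by (simp add: monoD)
    thus "Z \<le> lam n" using lam_PP_ge[of k] k by linarith
  qed
qed

lemma st_ge: "NN k \<le> n \<Longrightarrow> k \<le> st n"
proof (rule ccontr)
  assume "NN k \<le> n" "\<not> k \<le> st n"
  hence "NN (Suc (st n)) \<le> NN k" by (intro NN_mono) simp
  thus False using st_range[of n] \<open>NN k \<le> n\<close> by simp
qed

lemma gap_tendsto: "gap \<longlonglongrightarrow> 0"
proof (rule LIMSEQ_I)
  fix r :: real assume r: "0 < r"
  obtain k where k: "(1/2::real)^k < r" using real_arch_pow_inv[OF r, of "1/2"] by auto
  have "LL k \<le> (1/2)^k" by (simp add: LL_def Lh_def power_add power_divide) (simp add: field_simps)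
  show "\<exists>no. \<forall>n\<ge>no. norm (gap n - 0) < r"
  proof (intro exI allI impI)
    fix n assume "NN k \<le> n"
    hence "gap n \<le> dd k" using gap_bounds[of n] dd_antimono[OF st_ge] by (meson order.trans)
    thus "norm (gap n - 0) < r" using gap_pos[of n] dd_le_LL[of k] \<open>LL k \<le> _\<close> k by simp
  qed
qed



definition CC :: "nat \<Rightarrow> real set \<Rightarrow> int set" where
  "CC k G = {z. \<bar>of_int z * Lh k\<bar> \<le> RR k + 2 \<and> {of_int z * Lh k - LL k .. of_int z * Lh k + 2 * LL k} \<subseteq> G}"
definition vv :: "nat \<Rightarrow> int \<Rightarrow> nat \<Rightarrow> real" where
  "vv k z m = lam (PP k) + of_int z * Lh k + real m * hh k"
definition Uk :: "nat \<Rightarrow> real set \<Rightarrow> real set" where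
  "Uk k G = (\<Union>z\<in>CC k G. \<Union>m\<in>{..Qn k}. {vv k z m .. vv k z m + ee k})"
definition Vk :: "nat \<Rightarrow> real set \<Rightarrow> real set" where
  "Vk k G = (\<Union>z\<in>CC k G. \<Union>m\<in>{..Qn k}. {vv k z m - ee k <..< vv k z m + 2 * ee k})"
definition Wk :: "nat \<Rightarrow> real set \<Rightarrow> real set" where
  "Wk k G = (\<Union>z\<in>CC k G. \<Union>m\<in>{..Qn k}. {vv k z m - ee k .. vv k z m + 2 * ee k})"
definition Tset :: "nat \<Rightarrow> int set" where
  "Tset k = {t. \<bar>of_int t\<bar> * hh k \<le> RR k + 1}"
definition Coset :: "nat \<Rightarrow> real set" where
  "Coset k = (\<Union>t\<in>Tset k. {of_int t * hh k - ee k .. of_int t * hh k + 2 * ee k})"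
definition Sig :: "nat \<Rightarrow> real set \<Rightarrow> (int \<times> nat \<times> nat) set" where
  "Sig k G = {(z,m,n). z \<in> CC k G \<and> m \<le> Qn k \<and> n < NN k \<and>
                 vv k z m - RR k - 1 \<le> lam n \<and> lam n \<le> vv k z m + RR k + 1}"
definition Sparse :: "nat \<Rightarrow> real set \<Rightarrow> real set" where
  "Sparse k G = (\<Union>(z,m,n)\<in>Sig k G. {vv k z m - lam n - ee k .. vv k z m - lam n + 2 * ee k})"
definition Bad :: "nat \<Rightarrow> real set \<Rightarrow> real set" where
  "Bad k G = Coset k \<union> Sparse k G"

lemma int_bounded_card:
  fixes c B :: real assumes c: "c > 0" and B: "B \<ge> 0"
  shows "finite {t::int. \<bar>of_int t\<bar> * c \<le> B}" "real (card {t::int. \<bar>of_int t\<bar> * c \<le> B}) \<le> 2 * B / c + 1"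
proof -
  define M where "M = \<lfloor>B / c\<rfloor>"
  have sub: "{t::int. \<bar>of_int t\<bar> * c \<le> B} \<subseteq> {-M..M}"
  proof
    fix t :: int assume "t \<in> {t::int. \<bar>of_int t\<bar> * c \<le> B}"
    hence "\<bar>of_int t\<bar> \<le> B / c" using c by (simp add: field_simps)
    hence "\<bar>t\<bar> \<le> M" unfolding M_def by (simp add: le_floor_iff)
    thus "t \<in> {-M..M}" by auto
  qed
  show "finite {t::int. \<bar>of_int t\<bar> * c \<le> B}" using sub finite_subset by blast
  have "card {t::int. \<bar>of_int t\<bar> * c \<le> B} \<le> card {-M..M}" using sub by (intro card_mono) auto
  also have "card {-M..M} = nat (2 * M + 1)" by simp
  finally have "real (card {t::int. \<bar>of_int t\<bar> * c \<le> B}) \<le> real (nat (2 * M + 1))" by linarith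
  also have "\<dots> \<le> 2 * B / c + 1"
  proof -
    have "M \<ge> 0" unfolding M_def using B c by simp
    hence "real (nat (2 * M + 1)) = 2 * of_int M + 1" by simp
    moreover have "of_int M \<le> B / c" unfolding M_def by simp
    ultimately show ?thesis by simp
  qed
  finally show "real (card {t::int. \<bar>of_int t\<bar> * c \<le> B}) \<le> 2 * B / c + 1" .
qed

lemma CC_sub: "CC k G \<subseteq> {t::int. \<bar>of_int t\<bar> * Lh k \<le> RR k + 2}"
  using Lh_pos[of k] by (auto simp: CC_def abs_mult)

lemma CC_finite: "finite (CC k G)"
  using int_bounded_card(1)[OF Lh_pos[of k], of "RR k + 2"] RR_pos[of k] CC_sub[of k G]
  by (meson finite_subset add_nonneg_nonneg order_trans zero_le_one zero_le_numeral)

lemma CC_card: "real (card (CC k G)) \<le> 2 * (RR k + 2) / Lh k + 1"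
proof -
  have fin: "finite {t::int. \<bar>of_int t\<bar> * Lh k \<le> RR k + 2}"
    using int_bounded_card(1)[OF Lh_pos[of k], of "RR k + 2"] RR_pos[of k] by simp
  have "card (CC k G) \<le> card {t::int. \<bar>of_int t\<bar> * Lh k \<le> RR k + 2}"
    by (rule card_mono[OF fin CC_sub])
  thus ?thesis using int_bounded_card(2)[OF Lh_pos[of k], of "RR k + 2"] RR_pos[of k] by simp
qed

lemma Tset_finite: "finite (Tset k)"
  unfolding Tset_def using int_bounded_card(1)[OF hh_pos[of k], of "RR k + 1"] RR_pos[of k] by simp

lemma Tset_card: "real (card (Tset k)) \<le> 2 * (RR k + 1) / hh k + 1"
  unfolding Tset_def using int_bounded_card(2)[OF hh_pos[of k], of "RR k + 1"] RR_pos[of k] by simp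

lemma count_lemma:
  assumes g: "g > 0" and gaps: "\<And>i. i < M \<Longrightarrow> gap i \<ge> g" and l: "l \<ge> 0"
  shows "finite {n. n < M \<and> a \<le> lam n \<and> lam n \<le> a + l}"
        "real (card {n. n < M \<and> a \<le> lam n \<and> lam n \<le> a + l}) \<le> l / g + 1"
proof -
  define S where "S = {n. n < M \<and> a \<le> lam n \<and> lam n \<le> a + l}"
  have fin: "finite S" unfolding S_def by simp
  show "finite {n. n < M \<and> a \<le> lam n \<and> lam n \<le> a + l}" using fin by (simp add: S_def)
  show "real (card {n. n < M \<and> a \<le> lam n \<and> lam n \<le> a + l}) \<le> l / g + 1"
  proof (cases "S = {}")
    case True then show ?thesis using l g by (simp add: S_def[symmetric])
  next
    case False
    define lo where "lo = Min S"
    define hi where "hi = Max S"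
    have lo: "lo \<in> S" and hi: "hi \<in> S" using fin False by (auto simp: lo_def hi_def)
    have sub: "S \<subseteq> {lo..hi}" using fin by (auto simp: lo_def hi_def)
    have lohi: "lo \<le> hi" using sub lo by auto
    have "card S \<le> card {lo..hi}" using sub by (intro card_mono) auto
    hence c: "real (card S) \<le> real (hi - lo) + 1" using lohi by simp
    have "lam hi - lam lo = (\<Sum>i\<in>{lo..<hi}. gap i)" by (rule lam_diff[OF lohi])
    also have "\<dots> \<ge> (\<Sum>i\<in>{lo..<hi}. g)"
      using hi by (intro sum_mono gaps) (auto simp: S_def)
    finally have "real (hi - lo) * g \<le> lam hi - lam lo" using lohi by simp
    also have "\<dots> \<le> l" using lo hi by (auto simp: S_def)
    finally have "real (hi - lo) \<le> l / g" using g by (simp add: field_simps)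
    thus ?thesis using c by (simp add: S_def)
  qed
qed

lemma ivl_union_measure:
  assumes "finite I" "l \<ge> 0" "\<And>i. i \<in> I \<Longrightarrow> b i - a i \<le> l"
  shows "emeasure lborel (\<Union>i\<in>I. {a i .. b i}) \<le> ennreal (real (card I) * l)"
proof -
  have "emeasure lborel (\<Union>i\<in>I. {a i .. b i}) \<le> (\<Sum>i\<in>I. emeasure lborel {a i .. b i})"
    by (rule emeasure_subadditive_finite) (use assms in auto)
  also have "\<dots> \<le> (\<Sum>i\<in>I. ennreal l)"
  proof (intro sum_mono)
    fix i assume "i \<in> I"
    show "emeasure lborel {a i .. b i} \<le> ennreal l"
    proof (cases "a i \<le> b i")
      case True then show ?thesis using assms(3)[OF \<open>i \<in> I\<close>] by (simp add: ennreal_leI)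
    next
      case False then show ?thesis by simp
    qed
  qed
  also have "\<dots> = ennreal (real (card I) * l)" using assms(2) by (simp add: ennreal_mult ennreal_of_nat_eq_real_of_nat)
  finally show ?thesis .
qed

lemma Coset_measure: "emeasure lborel (Coset k) \<le> ennreal (1 / 2^(k+2))"
proof -
  have "emeasure lborel (Coset k) \<le> ennreal (real (card (Tset k)) * (3 * ee k))"
    unfolding Coset_def by (rule ivl_union_measure) (use Tset_finite ee_pos[of k] in auto)
  also have "\<dots> \<le> ennreal ((2 * (RR k + 1) / hh k + 1) * (3 * ee k))"
    using Tset_card[of k] ee_pos[of k] by (intro ennreal_leI mult_right_mono) auto
  also have "\<dots> \<le> ennreal (1 / 2^(k+2))" by (intro ennreal_leI coset_ineq)
  finally show ?thesis .
qed

lemma Sig_0: "Sig 0 G = {}" by (simp add: Sig_def NN_0)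

lemma Sig_Suc:
  "finite (Sig (Suc j) G) \<and> real (card (Sig (Suc j) G)) \<le>
     (2 * (RR (Suc j) + 2) / Lh (Suc j) + 1) * (real (Qn (Suc j)) + 1) * ((2 * RR (Suc j) + 2) / hh j + 1)"
proof -
  define k where "k = Suc j"
  define Nsp where "Nsp z m = {n. n < NN k \<and> vv k z m - RR k - 1 \<le> lam n \<and> lam n \<le> (vv k z m - RR k - 1) + (2 * RR k + 2)}" for z m
  have gaps: "\<And>i. i < NN k \<Longrightarrow> gap i \<ge> hh j" unfolding k_def by (rule gap_ge_before)
  have Nfin: "finite (Nsp z m)" for z m
    unfolding Nsp_def by (rule count_lemma(1)[OF hh_pos gaps]) (use RR_pos[of k] in auto)
  have Ncard: "real (card (Nsp z m)) \<le> (2 * RR k + 2) / hh j + 1" for z m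
    unfolding Nsp_def by (rule count_lemma(2)[OF hh_pos gaps]) (use RR_pos[of k] in auto)
  have eq: "Sig k G = Sigma (CC k G) (\<lambda>z. Sigma {..Qn k} (\<lambda>m. Nsp z m))"
    by (auto simp: Sig_def Nsp_def)
  have fin: "finite (Sig k G)" unfolding eq using CC_finite Nfin by (intro finite_SigmaI) auto
  have "card (Sig k G) = (\<Sum>z\<in>CC k G. card (Sigma {..Qn k} (\<lambda>m. Nsp z m)))"
    unfolding eq by (rule card_SigmaI) (use CC_finite Nfin in auto)
  also have "\<dots> = (\<Sum>z\<in>CC k G. \<Sum>m\<in>{..Qn k}. card (Nsp z m))"
    by (intro sum.cong refl card_SigmaI) (use Nfin in auto)
  finally have "real (card (Sig k G)) = (\<Sum>z\<in>CC k G. \<Sum>m\<in>{..Qn k}. real (card (Nsp z m)))"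
    by simp
  also have "\<dots> \<le> (\<Sum>z\<in>CC k G. \<Sum>m\<in>{..Qn k}. (2 * RR k + 2) / hh j + 1)"
    by (intro sum_mono Ncard)
  also have "\<dots> = real (card (CC k G)) * ((real (Qn k) + 1) * ((2 * RR k + 2) / hh j + 1))"
    by simp
  also have "\<dots> \<le> (2 * (RR k + 2) / Lh k + 1) * ((real (Qn k) + 1) * ((2 * RR k + 2) / hh j + 1))"
    using CC_card[of k G] hh_pos[of j] RR_pos[of k] by (intro mult_right_mono) auto
  finally show ?thesis using fin by (simp add: k_def mult.assoc)
qed

lemma Sparse_measure: "emeasure lborel (Sparse k G) \<le> ennreal (1 / 2^(k+2))"
proof (cases k)
  case 0 then show ?thesis by (simp add: Sparse_def Sig_0)
next
  case (Suc j)
  have "emeasure lborel (Sparse k G) \<le> ennreal (real (card (Sig k G)) * (3 * ee k))"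
    unfolding Sparse_def split_beta'
    by (rule ivl_union_measure) (use Sig_Suc[of j G] Suc ee_pos[of k] in auto)
  also have "\<dots> \<le> ennreal ((2 * (RR (Suc j) + 2) / Lh (Suc j) + 1) * (real (Qn (Suc j)) + 1) *
     ((2 * RR (Suc j) + 2) / hh j + 1) * (3 * ee (Suc j)))"
    using Sig_Suc[of j G] ee_pos[of k] Suc by (intro ennreal_leI mult_right_mono) auto
  also have "\<dots> \<le> ennreal (1 / 2^(k+2))" using sparse_ineq[of j] Suc by (intro ennreal_leI) simp
  finally show ?thesis .
qed

lemma Coset_sets: "Coset k \<in> sets lborel"
  unfolding Coset_def using Tset_finite by (intro sets.finite_UN) auto

lemma Sparse_sets: "Sparse k G \<in> sets lborel"
proof -
  have "finite (Sig k G)" by (cases k) (auto simp: Sig_0 Sig_Suc)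
  thus ?thesis unfolding Sparse_def by (intro sets.finite_UN) auto
qed

lemma Bad_sets: "Bad k G \<in> sets lborel"
  unfolding Bad_def using Coset_sets Sparse_sets by (rule sets.Un)

lemma Bad_measure: "emeasure lborel (Bad k G) \<le> ennreal (1 / 2^(k+1))"
proof -
  have "emeasure lborel (Bad k G) \<le> emeasure lborel (Coset k) + emeasure lborel (Sparse k G)"
    unfolding Bad_def by (rule emeasure_subadditive[OF Coset_sets Sparse_sets])
  also have "\<dots> \<le> ennreal (1 / 2^(k+2)) + ennreal (1 / 2^(k+2))"
    by (intro add_mono Coset_measure Sparse_measure)
  also have "\<dots> = ennreal (1 / 2^(k+1))" by (simp flip: ennreal_plus add: power_add)
  finally show ?thesis .
qed

definition Nul :: "real set \<Rightarrow> real set" where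
  "Nul G = (\<Inter>m. \<Union>i. Bad (i + m) G)"

lemma Nul_null: "Nul G \<in> null_sets lborel"
proof -
  have meas: "Nul G \<in> sets lborel" unfolding Nul_def using Bad_sets by auto
  have bound: "emeasure lborel (Nul G) \<le> ennreal (1 / 2^m)" for m
  proof -
    have "emeasure lborel (Nul G) \<le> emeasure lborel (\<Union>i. Bad (i + m) G)"
      by (rule emeasure_mono) (auto simp: Nul_def intro!: sets.countable_UN Bad_sets[simplified])
    also have "\<dots> \<le> (\<Sum>i. emeasure lborel (Bad (i + m) G))"
      by (rule emeasure_subadditive_countably) (use Bad_sets[simplified] in auto)
    also have "\<dots> \<le> (\<Sum>i. ennreal (1 / 2^(i + m + 1)))"
      by (intro suminf_le Bad_measure) auto
    also have "\<dots> = ennreal (1 / 2^m)"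
    proof -
      have "(\<lambda>i. 1 / 2^(i + m + 1) :: real) sums (1 / 2^m)"
      proof -
        have "(\<lambda>i. (1/2::real)^i) sums (1 / (1 - 1/2))" by (rule geometric_sums) simp
        hence "(\<lambda>i. (1 / 2^(m+1)) * (1/2::real)^i) sums ((1 / 2^(m+1)) * (1 / (1 - 1/2)))"
          by (rule sums_mult)
        thus ?thesis by (simp add: power_add power_divide field_simps)
      qed
      thus ?thesis by (intro suminf_ennreal_eq) auto
    qed
    finally show ?thesis .
  qed
  have "emeasure lborel (Nul G) \<le> 0"
  proof (rule ennreal_le_epsilon)
    fix r :: real assume r: "0 < r"
    obtain m where m: "(1/2::real)^m < r" using real_arch_pow_inv[OF r, of "1/2"] by auto
    have "emeasure lborel (Nul G) \<le> ennreal (1 / 2^m)" by (rule bound)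
    also have "\<dots> \<le> 0 + ennreal r" using m by (simp add: power_divide ennreal_leI)
    finally show "emeasure lborel (Nul G) \<le> 0 + ennreal r" .
  qed
  thus ?thesis using meas by (simp add: null_sets_def)
qed



lemma ee_le_Lh: "ee k \<le> Lh k"
proof -
  have q: "1 \<le> real (Qn k) * (real (Qn k) + 1) + 1" using Qn_pos[of k] by simp
  have "1 * ee k \<le> (real (Qn k) * (real (Qn k) + 1) + 1) * ee k"
    using q ee_pos[of k] by (intro mult_right_mono) auto
  thus ?thesis using cover_ineq[of k] by simp
qed

lemma Lh_le: "Lh k \<le> 1/4"
proof -
  have "Lh k = 1 / (4 * 2^k)" by (simp add: Lh_def power_add)
  also have "\<dots> \<le> 1 / 4" using pow2_ge1[of k] by (simp add: frac_le)
  finally show ?thesis .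
qed

lemma Qh_le: "real (Qn k) * hh k \<le> LL k"
  using small_ineq[of k] dd_pos[of k] ee_pos[of k] by linarith

lemma vv_bounds:
  assumes "z \<in> CC k G" "m \<le> Qn k"
  shows "lam (PP k) - RR k - 2 \<le> vv k z m" "vv k z m \<le> lam (PP k) + RR k + 3"
proof -
  have c: "\<bar>of_int z * Lh k\<bar> \<le> RR k + 2" using assms(1) by (simp add: CC_def)
  have "0 \<le> real m * hh k" using hh_pos[of k] by simp
  moreover have "real m * hh k \<le> real (Qn k) * hh k"
    using assms(2) hh_pos[of k] by (intro mult_right_mono) auto
  moreover note Qh_le[of k] LL_le[of k]
  ultimately show "lam (PP k) - RR k - 2 \<le> vv k z m" "vv k z m \<le> lam (PP k) + RR k + 3"
    using c unfolding vv_def by linarith+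
qed

lemma Wk_loc: "y \<in> Wk k G \<Longrightarrow> lam (PP k) - RR k - 3 \<le> y \<and> y \<le> lam (PP k) + RR k + 4"
  unfolding Wk_def using vv_bounds ee_le_Lh[of k] Lh_le[of k] by fastforce

lemma Uk_Vk: "Uk k G \<subseteq> Vk k G"
  unfolding Uk_def Vk_def using ee_pos[of k] by fastforce

lemma Vk_Wk: "Vk k G \<subseteq> Wk k G"
  unfolding Vk_def Wk_def by fastforce

definition lo :: "nat \<Rightarrow> real" where "lo k = lam (PP k) - RR k - 3"
definition hi :: "nat \<Rightarrow> real" where "hi k = lam (PP k) + RR k + 4"

lemma lo_mono: "k \<le> k' \<Longrightarrow> lo k \<le> lo k'"
proof (induction k' rule: dec_induct)
  case (step i)
  have "lo i \<le> lo (Suc i)" using lam_PP_step[of i] RR_pos[of i] by (simp add: lo_def RR_def)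
  thus ?case using step by simp
qed simp

lemma hi_lo: "k < k' \<Longrightarrow> hi k < lo k'"
proof -
  assume "k < k'"
  have "hi k < lo (Suc k)" using lam_PP_step[of k] RR_pos[of k] by (simp add: lo_def hi_def RR_def)
  also have "lo (Suc k) \<le> lo k'" using \<open>k < k'\<close> by (intro lo_mono) simp
  finally show ?thesis .
qed

lemma Wk_disj: "y \<in> Wk k G \<Longrightarrow> y \<in> Wk k' G \<Longrightarrow> k = k'"
proof (rule ccontr)
  assume a: "y \<in> Wk k G" "y \<in> Wk k' G" "k \<noteq> k'"
  show False
  proof (cases "k < k'")
    case True then show False using hi_lo[of k k'] Wk_loc[OF a(1)] Wk_loc[OF a(2)]
      by (simp add: lo_def hi_def)
  next
    case False then have "k' < k" using a(3) by simp
    then show False using hi_lo[of k' k] Wk_loc[OF a(1)] Wk_loc[OF a(2)]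
      by (simp add: lo_def hi_def)
  qed
qed

lemma lo_tendsto: "filterlim lo at_top sequentially"
  unfolding filterlim_at_top
proof
  fix Z :: real
  obtain K :: nat where K: "(Z + 4) / 12 \<le> real K" using real_arch_simple by blast
  show "\<forall>\<^sub>F k in sequentially. Z \<le> lo k"
  proof (rule eventually_sequentiallyI[of K])
    fix k assume "K \<le> k"
    hence "real K \<le> real k" by simp
    moreover have "lo k \<ge> 12 * real k - 4"
      using lam_PP_ge[of k] by (simp add: lo_def RR_def)
    ultimately show "Z \<le> lo k" using K by argo
  qed
qed



lemma bad_lemma:
  assumes xG: "x \<notin> G" and xR: "\<bar>x\<bar> \<le> RR k" and W: "x + lam n \<in> Wk k G"
  shows "x \<in> Bad k G"
proof -
  obtain z m where z: "z \<in> CC k G" and m: "m \<le> Qn k"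
    and lo1: "vv k z m - ee k \<le> x + lam n" and hi1: "x + lam n \<le> vv k z m + 2 * ee k"
    using W unfolding Wk_def by auto
  define p where "p = lam (PP k)"
  define c where "c = of_int z * Lh k"
  have vvc: "vv k z m = p + c + real m * hh k" by (simp add: vv_def p_def c_def)
  have e1: "ee k \<le> 1/4" using ee_le_Lh[of k] Lh_le[of k] by linarith
  have epos: "0 < ee k" by (rule ee_pos)
  have "n < NN k \<or> (NN k \<le> n \<and> n < PP k) \<or> (PP k \<le> n \<and> n \<le> PP k + II k) \<or> PP k + II k < n"
    by linarith
  then show ?thesis
  proof (elim disjE conjE)
    assume n: "n < NN k"
    have "(z, m, n) \<in> Sig k G" unfolding Sig_def using z m n lo1 hi1 xR e1 by auto
    moreover have "x \<in> {vv k z m - lam n - ee k .. vv k z m - lam n + 2 * ee k}" using lo1 hi1 by auto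
    ultimately have "x \<in> Sparse k G" unfolding Sparse_def by blast
    thus ?thesis by (simp add: Bad_def)
  next
    assume n1: "NN k \<le> n" and n2: "n < PP k"
    define j where "j = PP k - n"
    have j: "j \<le> JJ k" "n = PP k - j" using n1 n2 by (auto simp: j_def PP_def)
    have ln: "lam n = p - real j * dd k" using lam_down[OF j(1)] j(2) by (simp add: p_def)
    have jd0: "real j * dd k \<le> real (JJ k) * dd k"
      by (rule mult_right_mono) (use j(1) dd_pos[of k] in auto)
    have jd: "0 \<le> real j * dd k" "real j * dd k \<le> LL k + dd k"
      using dd_pos[of k] JJ_upper[of k] jd0 by (simp add: less_imp_le, linarith)
    have mh: "0 \<le> real m * hh k" "real m * hh k \<le> real (Qn k) * hh k"
      using hh_pos[of k] m by (auto intro: mult_right_mono)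
    have "c - LL k \<le> x" using lo1 vvc ln jd mh ee_le_Lh[of k] Lh_pos[of k] unfolding LL_def by linarith
    moreover have "x \<le> c + 2 * LL k" using hi1 vvc ln jd mh small_ineq[of k] by simp
    ultimately have "x \<in> G" using z unfolding CC_def c_def by auto
    thus ?thesis using xG by simp
  next
    assume n1: "PP k \<le> n" and n2: "n \<le> PP k + II k"
    define i where "i = n - PP k"
    have i: "i \<le> II k" "n = PP k + i" using n1 n2 by (auto simp: i_def)
    have ln: "lam n = p + real i * hh k" using lam_up[OF i(1)] i(2) by (simp add: p_def)
    define t :: int where "t = z * int (AA k) + int m - int i"
    have ct: "c + real m * hh k - real i * hh k = of_int t * hh k"
      by (simp add: c_def t_def LhA[of k] algebra_simps)
    have x1: "of_int t * hh k - ee k \<le> x" using lo1 vvc ln ct by simp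
    have x2: "x \<le> of_int t * hh k + 2 * ee k" using hi1 vvc ln ct by simp
    have "\<bar>of_int t * hh k\<bar> \<le> RR k + 1" using x1 x2 xR e1 by linarith
    hence "t \<in> Tset k" using hh_pos[of k] by (simp add: Tset_def abs_mult)
    hence "x \<in> Coset k" using x1 x2 unfolding Coset_def by (intro UN_I[of t]) auto
    thus ?thesis by (simp add: Bad_def)
  next
    assume n: "PP k + II k < n"
    have "lam (PP k + II k) < lam n" using lam_strict_mono n by (simp add: strict_mono_less)
    moreover have "lam (PP k + II k) = p + real (II k) * hh k" using lam_up[of "II k" k] by (simp add: p_def)
    moreover note II_lower[of k] vv_bounds(2)[OF z m]
    moreover have "- RR k \<le> x" using xR by linarith
    ultimately have False using hi1 e1 RR_pos[of k] unfolding p_def by argo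
    thus ?thesis ..
  qed
qed



lemma decomp:
  fixes Q s :: nat
  assumes Q: "Q \<ge> 1" and s: "Q * (Q + 1) \<le> s"
  shows "\<exists>m j. m \<le> Q \<and> s = m * Q + j * (Q + 1)"
proof -
  define q where "q = s div Q"
  define r where "r = s mod Q"
  have rQ: "r < Q" using Q by (simp add: r_def)
  have qs: "q * Q + r = s" by (simp add: q_def r_def)
  have "Q + 1 \<le> q"
  proof -
    have "(Q * (Q + 1)) div Q \<le> s div Q" by (rule div_le_mono[OF s])
    thus ?thesis using Q by (simp add: q_def)
  qed
  hence rq: "r \<le> q" using rQ by simp
  define t where "t = q - r"
  define m where "m = t mod (Q + 1)"
  define j where "j = r + Q * (t div (Q + 1))"
  have tt: "t mod (Q + 1) + (Q + 1) * (t div (Q + 1)) = t" by (rule mod_mult_div_eq)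
  have "m * Q + j * (Q + 1) = Q * (t mod (Q + 1) + (Q + 1) * (t div (Q + 1))) + r * (Q + 1)"
    by (simp add: m_def j_def algebra_simps)
  also have "\<dots> = Q * t + r * Q + r" using tt by (simp add: algebra_simps)
  also have "\<dots> = Q * (t + r) + r" by (simp add: algebra_simps)
  also have "\<dots> = q * Q + r" using rq by (simp add: t_def algebra_simps)
  also have "\<dots> = s" by (rule qs)
  finally have "m * Q + j * (Q + 1) = s" .
  moreover have "m \<le> Q" by (simp add: m_def)
  ultimately show ?thesis by metis
qed

lemma cover_lemma:
  assumes G: "open G" and x: "x \<in> G"
  shows "\<exists>k0. \<forall>k\<ge>k0. \<exists>n. x + lam n \<in> Uk k G"
proof -
  obtain \<epsilon> where eps: "\<epsilon> > 0" "ball x \<epsilon> \<subseteq> G" using G x by (meson open_contains_ball)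
  obtain k1 where k1: "(1/2::real)^k1 < \<epsilon>" using real_arch_pow_inv[OF eps(1), of "1/2"] by auto
  obtain k2 :: nat where k2: "\<bar>x\<bar> \<le> real k2" using real_arch_simple by blast
  show ?thesis
  proof (rule exI[of _ "max k1 k2"], intro allI impI)
    fix k assume kk: "max k1 k2 \<le> k"
    have LLk: "2 * LL k < \<epsilon>"
    proof -
      have "2 * LL k = (1/2)^k" by (simp add: LL_def Lh_def power_add power_divide)
      also have "\<dots> \<le> (1/2)^k1" using kk by (intro power_decreasing) auto
      finally show ?thesis using k1 by linarith
    qed
    have xR: "\<bar>x\<bar> \<le> RR k" using k2 kk by (simp add: RR_def)
    define z :: int where "z = \<lfloor>x / Lh k\<rfloor> - 1"
    define c where "c = of_int z * Lh k"
    have Lp: "Lh k > 0" by (rule Lh_pos)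
    have c1: "c \<le> x - Lh k"
    proof -
      have "of_int z \<le> x / Lh k - 1" unfolding z_def by simp
      hence "of_int z * Lh k \<le> (x / Lh k - 1) * Lh k" using Lp by (intro mult_right_mono) auto
      moreover have "(x / Lh k - 1) * Lh k = x - Lh k" using Lp by (simp add: field_simps)
      ultimately show ?thesis by (simp add: c_def)
    qed
    have c2: "x - 2 * Lh k < c"
    proof -
      have "x / Lh k - 2 < of_int z" unfolding z_def by linarith
      hence "(x / Lh k - 2) * Lh k < of_int z * Lh k" using Lp by (intro mult_strict_right_mono) auto
      moreover have "(x / Lh k - 2) * Lh k = x - 2 * Lh k" using Lp by (simp add: field_simps)
      ultimately show ?thesis by (simp add: c_def)
    qed
    have zC: "z \<in> CC k G"
    proof -
      have "\<bar>of_int z * Lh k\<bar> \<le> RR k + 2" using c1 c2 xR Lh_le[of k] by (simp add: c_def)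
      moreover have "{c - LL k .. c + 2 * LL k} \<subseteq> G"
      proof
        fix y assume "y \<in> {c - LL k .. c + 2 * LL k}"
        hence "dist x y < \<epsilon>" using c1 c2 LLk Lp by (simp add: dist_real_def LL_def) linarith
        thus "y \<in> G" using eps(2) by auto
      qed
      ultimately show ?thesis by (simp add: CC_def c_def)
    qed
    define Q where "Q = Qn k"
    have Q1: "Q \<ge> 1" using Qn_pos by (simp add: Q_def)
    define s where "s = nat \<lfloor>(x - c) / ee k\<rfloor>"
    have ep: "ee k > 0" by (rule ee_pos)
    have xc: "Lh k \<le> x - c" "x - c < LL k" using c1 c2 by (auto simp: LL_def)
    have nn: "0 \<le> (x - c) / ee k" using xc ep Lp by simp
    have rs: "real s = of_int \<lfloor>(x - c) / ee k\<rfloor>" using nn by (simp add: s_def)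
    have s0: "real s \<le> (x - c) / ee k" "(x - c) / ee k < real s + 1" using rs by linarith+
    have s1: "real s * ee k \<le> x - c" "x - c < real s * ee k + ee k"
      using s0 ep by (simp_all add: field_simps)
    have sQ: "Q * (Q + 1) \<le> s"
    proof -
      have "(real Q * (real Q + 1) + 1) * ee k \<le> x - c" using cover_ineq[of k] xc by (simp add: Q_def)
      hence "real Q * (real Q + 1) + 1 \<le> (x - c) / ee k" using ep by (simp add: field_simps)
      hence "real Q * (real Q + 1) + 1 < real s + 1" using s0 by linarith
      hence "real (Q * (Q + 1)) < real s" by (simp add: algebra_simps)
      hence "Q * (Q + 1) < s" by (simp only: of_nat_less_iff)
      thus ?thesis by simp
    qed
    obtain m j where mj: "m \<le> Q" "s = m * Q + j * (Q + 1)" using decomp[OF Q1 sQ] by blast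
    have se: "real s * ee k = real m * hh k + real j * dd k"
      using mj(2) by (simp add: hh_def dd_def Q_def algebra_simps)
    have jJ: "j \<le> JJ k"
    proof (rule ccontr)
      assume "\<not> j \<le> JJ k"
      hence "real (JJ k) * dd k \<le> real j * dd k" using dd_pos[of k] by (intro mult_right_mono) auto
      moreover have "0 \<le> real m * hh k" using hh_pos[of k] by simp
      ultimately show False using JJ_lower[of k] se s1 xc by linarith
    qed
    define n where "n = PP k - j"
    have ln: "lam n = lam (PP k) - real j * dd k" unfolding n_def by (rule lam_down[OF jJ])
    have "x + lam n \<in> {vv k z m .. vv k z m + ee k}"
      using ln se s1 unfolding vv_def c_def[symmetric] by auto
    moreover have "m \<in> {..Qn k}" using mj by (simp add: Q_def)
    ultimately show "\<exists>n. x + lam n \<in> Uk k G" unfolding Uk_def using zC by blast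
  qed
qed



lemma closed_UN_loc:
  fixes A :: "nat \<Rightarrow> real set"
  assumes cl: "\<And>k. closed (A k)" and lb: "\<And>k y. y \<in> A k \<Longrightarrow> t k \<le> y"
    and lim: "filterlim t at_top sequentially"
  shows "closed (\<Union>k. A k)"
  unfolding closed_def
proof (rule open_subopen[THEN iffD2], intro ballI)
  fix x assume x: "x \<in> - (\<Union>k. A k)"
  obtain K where K: "\<And>k. k \<ge> K \<Longrightarrow> x + 1 \<le> t k"
    using lim unfolding filterlim_at_top eventually_sequentially by blast
  define F where "F = (\<Union>k\<in>{..<K}. A k)"
  have "closed F" unfolding F_def by (intro closed_UN) (auto simp: cl)
  define T where "T = {..<x+1} \<inter> - F"
  have "open T" unfolding T_def using \<open>closed F\<close> by (intro open_Int) (auto simp: closed_def)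
  moreover have "x \<in> T" using x by (auto simp: T_def F_def)
  moreover have "T \<subseteq> - (\<Union>k. A k)"
  proof
    fix y assume y: "y \<in> T"
    show "y \<in> - (\<Union>k. A k)"
    proof
      assume "y \<in> (\<Union>k. A k)"
      then obtain k where k: "y \<in> A k" by auto
      show False
      proof (cases "k < K")
        case True then show False using y k by (auto simp: T_def F_def)
      next
        case False then show False using K[of k] lb[OF k] y by (auto simp: T_def)
      qed
    qed
  qed
  ultimately show "\<exists>T. open T \<and> x \<in> T \<and> T \<subseteq> - (\<Union>k. A k)" by blast
qed

lemma Uk_closed: "closed (Uk k G)"
  unfolding Uk_def using CC_finite by (intro closed_UN) auto

lemma U_closed: "closed (\<Union>k. Uk k G)"
proof (rule closed_UN_loc[OF Uk_closed _ lo_tendsto])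
  fix k y assume "y \<in> Uk k G"
  hence "y \<in> Wk k G" using Uk_Vk Vk_Wk by blast
  thus "lo k \<le> y" using Wk_loc by (simp add: lo_def)
qed

lemma V_open: "open (\<Union>k. Vk k G)"
  unfolding Vk_def by (intro open_UN ballI) auto



lemma Uk_Wk: "Uk k G \<subseteq> Wk k G" using Uk_Vk Vk_Wk by blast

lemma div_lemma:
  assumes G: "open G" and x: "x \<in> G"
    and fc: "\<And>k y. y \<in> Uk k G \<Longrightarrow> c k \<le> f y"
    and c0: "\<And>k. 0 \<le> c k" and ns: "\<not> summable c"
  shows "shift_sum f lam x = \<infinity>"
proof -
  obtain k0 where k0: "\<And>k. k \<ge> k0 \<Longrightarrow> \<exists>n. x + lam n \<in> Uk k G"
    using cover_lemma[OF G x] by blast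
  define nk where "nk k = (SOME n. x + lam n \<in> Uk (k + k0) G)" for k
  have nk: "x + lam (nk k) \<in> Uk (k + k0) G" for k
    unfolding nk_def by (rule someI_ex) (rule k0, simp)
  have inj: "inj nk"
  proof (rule injI)
    fix a b assume "nk a = nk b"
    hence "x + lam (nk a) \<in> Wk (a + k0) G" "x + lam (nk a) \<in> Wk (b + k0) G"
      using subsetD[OF Uk_Wk nk[of a]] subsetD[OF Uk_Wk nk[of b]] by auto
    hence "a + k0 = b + k0" by (rule Wk_disj)
    thus "a = b" by simp
  qed
  have fc': "c (k + k0) \<le> f (x + lam (nk k))" for k by (rule fc[OF nk])
  have part: "(\<Sum>k<K. ennreal (c (k + k0))) \<le> shift_sum f lam x" for K
  proof -
    have "(\<Sum>k<K. ennreal (c (k + k0))) \<le> (\<Sum>k<K. ennreal (f (x + lam (nk k))))"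
      by (intro sum_mono ennreal_leI fc')
    also have "\<dots> = (\<Sum>n\<in>nk ` {..<K}. ennreal (f (x + lam n)))"
      using inj by (simp add: sum.reindex inj_on_subset[OF inj])
    also have "\<dots> \<le> (\<Sum>n. ennreal (f (x + lam n)))"
      by (rule sum_le_suminf) auto
    finally show ?thesis by (simp add: shift_sum_def)
  qed
  have "(\<Sum>k. ennreal (c (k + k0))) \<le> shift_sum f lam x"
    by (rule suminf_le_const) (auto intro: part)
  moreover have "(\<Sum>k. ennreal (c (k + k0))) = \<infinity>"
  proof (rule ccontr)
    assume "(\<Sum>k. ennreal (c (k + k0))) \<noteq> \<infinity>"
    hence "summable (\<lambda>k. c (k + k0))" using c0 by (intro summable_suminf_not_top) auto
    hence "summable c" by simp
    thus False using ns by simp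
  qed
  ultimately show ?thesis by (simp add: top_unique)
qed

lemma fin_lemma:
  assumes xG: "x \<notin> G" and xN: "x \<notin> Nul G"
    and f0: "\<And>y. 0 \<le> f y" and fW: "\<And>y. f y \<noteq> 0 \<Longrightarrow> y \<in> (\<Union>k. Wk k G)"
  shows "shift_sum f lam x \<noteq> \<infinity>"
proof -
  obtain m where m: "\<And>i. x \<notin> Bad (i + m) G" using xN unfolding Nul_def by blast
  obtain K0 :: nat where K0: "\<bar>x\<bar> \<le> real K0" using real_arch_simple by blast
  define K where "K = max m K0"
  have key: "lam n < lo K - x" if nz: "f (x + lam n) \<noteq> 0" for n
  proof -
    obtain k where k: "x + lam n \<in> Wk k G" using fW[OF nz] by blast
    have "k < K"
    proof (rule ccontr)
      assume "\<not> k < K"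
      hence "K \<le> k" by simp
      hence "\<bar>x\<bar> \<le> RR k" using K0 by (simp add: K_def RR_def)
      hence "x \<in> Bad k G" using bad_lemma[OF xG _ k] by simp
      moreover have "k = (k - m) + m" using \<open>K \<le> k\<close> by (simp add: K_def)
      ultimately show False using m[of "k - m"] by simp
    qed
    hence "hi k < lo K" by (rule hi_lo)
    thus ?thesis using Wk_loc[OF k] by (simp add: hi_def)
  qed
  obtain N where N: "\<And>n. n \<ge> N \<Longrightarrow> lo K - x \<le> lam n"
    using lam_tendsto unfolding filterlim_at_top eventually_sequentially by blast
  have z: "ennreal (f (x + lam n)) = 0" if "n \<notin> {..<N}" for n
  proof -
    have "f (x + lam n) = 0" using key[of n] N[of n] that by force
    thus ?thesis by simp
  qed
  have "shift_sum f lam x = (\<Sum>n\<in>{..<N}. ennreal (f (x + lam n)))"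
    unfolding shift_sum_def by (rule suminf_finite) (use z in auto)
  also have "\<dots> = ennreal (\<Sum>n\<in>{..<N}. f (x + lam n))" using f0 by simp
  finally show ?thesis by simp
qed

lemma good_lemma:
  assumes G: "open G" and f0: "\<And>y. 0 \<le> f y"
    and fW: "\<And>y. f y \<noteq> 0 \<Longrightarrow> y \<in> (\<Union>k. Wk k G)"
    and fc: "\<And>k y. y \<in> Uk k G \<Longrightarrow> c k \<le> f y"
    and c0: "\<And>k. 0 \<le> c k" and ns: "\<not> summable c"
  shows "good_for f lam G"
  unfolding good_for_def
proof
  have "x \<in> Nul G" if "x \<notin> G" "shift_sum f lam x = \<infinity>" for x
    using fin_lemma[of x G f, OF that(1) _ f0 fW] that(2) by blast
  hence "{x. x \<notin> G \<and> shift_sum f lam x = \<infinity>} \<subseteq> Nul G" by blast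
  moreover have "Nul G \<in> null_sets lebesgue"
    by (rule null_sets_completionI[OF Nul_null])
  ultimately show "{x. x \<notin> G \<and> shift_sum f lam x = \<infinity>} \<in> null_sets lebesgue"
    by (rule null_sets_completion_subset)
  show "\<forall>x\<in>G. shift_sum f lam x = \<infinity>"
  proof
    fix x assume x: "x \<in> G"
    show "shift_sum f lam x = \<infinity>" by (rule div_lemma[of G x c f, OF G x fc c0 ns])
  qed
qed

lemma one_not_summable: "\<not> summable (\<lambda>k::nat. 1::real)"
proof
  assume "summable (\<lambda>k::nat. 1::real)"
  hence "(\<lambda>k::nat. 1::real) \<longlonglongrightarrow> 0" by (rule summable_LIMSEQ_zero)
  thus False by (simp add: LIMSEQ_const_iff)
qed

lemma harm_not_summable: "\<not> summable (\<lambda>k::nat. 1 / (5 * (real k + 1)))"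
proof
  assume "summable (\<lambda>k::nat. 1 / (5 * (real k + 1)))"
  hence "summable (\<lambda>k::nat. 5 * (1 / (5 * (real k + 1))))" by (rule summable_mult)
  moreover have "(\<lambda>k::nat. 5 * (1 / (5 * (real k + 1)))) = (\<lambda>k. inverse (real (Suc k)))"
    by (simp add: fun_eq_iff field_simps)
  ultimately have "summable (\<lambda>k::nat. inverse (real (Suc k)))" by simp
  hence "summable (\<lambda>k::nat. inverse (real k))" using summable_Suc_iff[of "\<lambda>k. inverse (real k)"] by simp
  thus False using not_summable_harmonic[where 'a=real] by simp
qed

lemma Uk_bound: "y \<in> Uk k G \<Longrightarrow> \<bar>y\<bar> \<le> 21 * (real k + 1)^2"
proof -
  assume "y \<in> Uk k G"
  hence "y \<in> Wk k G" using Uk_Vk Vk_Wk by blast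
  hence a: "lam (PP k) - RR k - 3 \<le> y" "y \<le> lam (PP k) + RR k + 4" by (auto dest: Wk_loc)
  have b: "0 \<le> lam (PP k)" "lam (PP k) \<le> 15 * (real k + 1)^2" using lam_nonneg lam_PP_le by auto
  have c: "real k + 5 \<le> 6 * (real k + 1)^2" by (simp add: power2_eq_square algebra_simps)
  show ?thesis using a b c by (simp add: RR_def abs_le_iff)
qed

theorem main_result:
  "\<exists>lam :: nat \<Rightarrow> real.
     strict_mono lam \<and> filterlim lam at_top sequentially \<and>
     decseq (\<lambda>n. lam (Suc n) - lam n) \<and> (\<lambda>n. lam (Suc n) - lam n) \<longlonglongrightarrow> 0 \<and>
     (\<forall>G :: real set. open G \<longrightarrow>
        (\<exists>U. closed U \<and> good_for (indicator U) lam G) \<and>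
        (\<exists>g :: real \<Rightarrow> real. continuous_on UNIV g \<and> (\<forall>x. 0 \<le> g x) \<and>
             (g \<longlongrightarrow> 0) at_top \<and> good_for g lam G))"
proof (rule exI[of _ lam], intro conjI allI impI)
  show "strict_mono lam" by (rule lam_strict_mono)
  show "filterlim lam at_top sequentially" by (rule lam_tendsto)
  have gd: "(\<lambda>n. lam (Suc n) - lam n) = gap" by (simp add: lam_Suc fun_eq_iff)
  show "decseq (\<lambda>n. lam (Suc n) - lam n)" unfolding gd by (rule gap_decseq)
  show "(\<lambda>n. lam (Suc n) - lam n) \<longlonglongrightarrow> 0" unfolding gd by (rule gap_tendsto)
  fix G :: "real set" assume G: "open G"
  define U where "U = (\<Union>k. Uk k G)"
  define V where "V = (\<Union>k. Vk k G)"
  have UV: "U \<subseteq> V" unfolding U_def V_def using Uk_Vk by blast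
  have VW: "V \<subseteq> (\<Union>k. Wk k G)" unfolding V_def using Vk_Wk by blast
  show "\<exists>U. closed U \<and> good_for (indicator U) lam G"
  proof (intro exI conjI)
    show "closed U" unfolding U_def by (rule U_closed)
    show "good_for (indicator U) lam G"
    proof (rule good_lemma[OF G, where c="\<lambda>k. 1"])
      show "\<And>y. (0::real) \<le> indicator U y" by simp
      show "\<And>y. indicator U y \<noteq> (0::real) \<Longrightarrow> y \<in> (\<Union>k. Wk k G)"
        using UV VW by (auto simp: indicator_def split: if_splits)
      show "\<And>k y. y \<in> Uk k G \<Longrightarrow> (1::real) \<le> indicator U y" by (auto simp: U_def indicator_def)
      show "\<And>k. 0 \<le> (1::real)" by simp
      show "\<not> summable (\<lambda>k::nat. 1::real)" by (rule one_not_summable)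
    qed
  qed
  have Ucl: "closed U" unfolding U_def by (rule U_closed)
  have Vop: "open V" unfolding V_def by (rule V_open)
  obtain F :: "real \<Rightarrow> real" where Fc: "continuous_on UNIV F"
    and Fr: "\<And>x. F x \<in> closed_segment 1 0" and F1: "\<And>x. x \<in> U \<Longrightarrow> F x = 1"
    and F0: "\<And>x. x \<in> - V \<Longrightarrow> F x = 0"
    using Urysohn[OF Ucl _ , of "- V" 1 0] Vop UV by (auto simp: closed_Compl)
  have Fr': "0 \<le> F x" "F x \<le> 1" for x using Fr[of x] by (auto simp: closed_segment_eq_real_ivl)
  define g where "g y = F y / sqrt (1 + \<bar>y\<bar>)" for y
  have sp: "sqrt (1 + \<bar>y\<bar>) > 0" for y :: real by simp
  show "\<exists>g :: real \<Rightarrow> real. continuous_on UNIV g \<and> (\<forall>x. 0 \<le> g x) \<and>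
             (g \<longlongrightarrow> 0) at_top \<and> good_for g lam G"
  proof (intro exI conjI allI)
    show "continuous_on UNIV g" unfolding g_def
      by (intro continuous_intros Fc) (use sp in auto)
    show "0 \<le> g x" for x unfolding g_def using Fr'[of x] by simp
    show "(g \<longlongrightarrow> 0) at_top"
    proof (rule tendsto_sandwich[of "\<lambda>_. 0" g _ "\<lambda>y. 1 / sqrt (1 + y)"])
      show "\<forall>\<^sub>F n in at_top. 0 \<le> g n" unfolding g_def using Fr' by (auto intro: always_eventually)
      show "\<forall>\<^sub>F n in at_top. g n \<le> 1 / sqrt (1 + n)"
      proof (rule eventually_mono[OF eventually_ge_at_top[of "0::real"]])
        fix y :: real assume y: "0 \<le> y"
        show "g y \<le> 1 / sqrt (1 + y)" unfolding g_def using Fr'[of y] y by (simp add: divide_right_mono)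
      qed
      show "((\<lambda>_. 0) \<longlongrightarrow> (0::real)) at_top" by simp
      show "((\<lambda>y. 1 / sqrt (1 + y)) \<longlongrightarrow> (0::real)) at_top" by real_asymp
    qed
    show "good_for g lam G"
    proof (rule good_lemma[OF G, where c="\<lambda>k. 1 / (5 * (real k + 1))"])
      show "\<And>y. 0 \<le> g y" unfolding g_def using Fr' by simp
      show "\<And>y. g y \<noteq> 0 \<Longrightarrow> y \<in> (\<Union>k. Wk k G)"
      proof -
        fix y assume "g y \<noteq> 0"
        hence "F y \<noteq> 0" by (simp add: g_def)
        hence "y \<in> V" using F0 by blast
        thus "y \<in> (\<Union>k. Wk k G)" using VW by blast
      qed
      show "\<And>k. 0 \<le> 1 / (5 * (real k + 1))" by simp
      show "\<not> summable (\<lambda>k::nat. 1 / (5 * (real k + 1)))" by (rule harm_not_summable)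
      fix k y assume y: "y \<in> Uk k G"
      have "F y = 1" using F1 y by (auto simp: U_def)
      have q: "1 \<le> (real k + 1)^2" by (rule one_le_power) simp
      have e: "(5 * (real k + 1))^2 = 25 * (real k + 1)^2" by (simp only: power_mult_distrib) simp
      have "1 + \<bar>y\<bar> \<le> (5 * (real k + 1))^2"
        using Uk_bound[OF y] q e by linarith
      hence "sqrt (1 + \<bar>y\<bar>) \<le> 5 * (real k + 1)"
        by (metis real_sqrt_le_mono real_sqrt_abs abs_of_nonneg of_nat_0_le_iff add_nonneg_nonneg mult_nonneg_nonneg zero_le_numeral zero_le_one)
      hence "1 / (5 * (real k + 1)) \<le> 1 / sqrt (1 + \<bar>y\<bar>)"
        using sp[of y] by (intro divide_left_mono) auto
      thus "1 / (5 * (real k + 1)) \<le> g y" using \<open>F y = 1\<close> by (simp add: g_def)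
    qed
  qed
qed


theorem theorem2p1:
  shows "\<exists>lam :: nat \<Rightarrow> real.
     strict_mono lam \<and> filterlim lam at_top sequentially \<and>
     decseq (\<lambda>n. lam (Suc n) - lam n) \<and> (\<lambda>n. lam (Suc n) - lam n) \<longlonglongrightarrow> 0 \<and>
     (\<forall>G :: real set. open G \<longrightarrow>
        (\<exists>U. closed U \<and> good_for (indicator U) lam G) \<and>
        (\<exists>g :: real \<Rightarrow> real. continuous_on UNIV g \<and> (\<forall>x. 0 \<le> g x) \<and>
             (g \<longlongrightarrow> 0) at_top \<and> good_for g lam G))"
  by (rule main_result)

end
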